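(* Let $\pi_1$ be a positive probability density on $\mathbb{R}$ with $\log\pi_1\in C^1(\mathbb{R})$ and suppose that for some $q\in[0,1)$, $\left|\frac{d}{dx_1}\log\pi_1(x_1)\right|=\Theta(|x_1|^q)$ as $|x_1|\to\infty$. Let $X_1\sim\pi_1$ and fix $k\ge0$. Then there exists $\gamma\in(0,\infty)$ such that $\mathbb{P}(|X_1|>k+h)\le\Theta\big(e^{-\gamma h^{1+q}-q\log h}\big)$ as $h\to\infty$, i.e. $\limsup_{h\to\infty}\mathbb{P}(|X_1|>k+h)\,e^{\gamma h^{1+q}+q\log h}<\infty$.
   Context: $F=\Theta(G)$ as $|x_1|\to\infty$ means $\liminf F/G>0$ and $\limsup F/G<\infty$. *)

theory Defs
  imports "HOL-Analysis.Analysis"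
begin

end

theory Submission
  imports Defs
begin

lemma no_const_lower:
  fixes f :: "real \<Rightarrow> real"
  assumes intf: "integrable lborel f" and one: "integral\<^sup>L lborel f = 1"
    and nn: "\<And>x. 0 \<le> f x" and e: "\<epsilon> > 0"
    and lb: "\<And>x. a \<le> x \<Longrightarrow> x \<le> a + 2/\<epsilon> \<Longrightarrow> \<epsilon> \<le> f x"
  shows False
proof -
  have int2: "integrable lborel (\<lambda>x. \<epsilon> * indicator {a..a+2/\<epsilon>} x :: real)"
    by (intro integrable_mult_right integrable_real_indicator) (auto simp: emeasure_lborel_Icc_eq)
  have "integral\<^sup>L lborel (\<lambda>x. \<epsilon> * indicator {a..a+2/\<epsilon>} x :: real) \<le> integral\<^sup>L lborel f"
    by (rule integral_mono[OF int2 intf]) (auto simp: indicator_def nn lb)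
  moreover have "integral\<^sup>L lborel (\<lambda>x. \<epsilon> * indicator {a..a+2/\<epsilon>} x :: real) = 2"
    using e by simp
  ultimately show False using one by simp
qed

lemma sign_const:
  fixes D :: "real \<Rightarrow> real"
  assumes cont: "continuous_on UNIV D"
    and nz: "\<And>z. min x y \<le> z \<Longrightarrow> z \<le> max x y \<Longrightarrow> D z \<noteq> 0"
    and px: "D x > 0"
  shows "D y > 0"
proof (rule ccontr)
  assume "\<not> D y > 0"
  hence dy: "D y \<le> 0" by simp
  show False
  proof (cases "x \<le> y")
    case True
    obtain z where "x \<le> z" "z \<le> y" "D z = 0"
      using IVT2'[of D y 0 x] dy px True continuous_on_subset[OF cont] by force
    thus False using nz[of z] True by auto
  next
    case False
    obtain z where "y \<le> z" "z \<le> x" "D z = 0"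
      using IVT'[of D y 0 x] dy px False continuous_on_subset[OF cont] by force
    thus False using nz[of z] False by auto
  qed
qed

lemma exp_abs_nn:
  fixes b :: real assumes b: "b > 0"
  shows "(\<integral>\<^sup>+x. ennreal (exp (-b*\<bar>x\<bar>)) \<partial>lborel) \<le> ennreal (2/b)"
proof -
  define E where "E = (\<lambda>x::real. ennreal (exp (-b*x)) * indicator {0..} x)"
  have Em[measurable]: "E \<in> borel_measurable borel" unfolding E_def by measurable
  have E1: "(\<integral>\<^sup>+x. E x \<partial>lborel) = ennreal (1/b)"
  proof -
    have "(\<integral>\<^sup>+x. E x \<partial>lborel) = ennreal (0 - (- exp (-b*0)/b))"
      unfolding E_def
    proof (rule nn_integral_FTC_atLeast)
      show "(\<lambda>x. exp (-b*x)) \<in> borel_measurable borel" by measurable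
      show "DERIV (\<lambda>x. - exp (-b*x)/b) x :> exp (-b*x)" for x
        using b by (auto intro!: derivative_eq_intros)
      show "0 \<le> exp (-b*x)" for x by simp
      show "((\<lambda>x. - exp (-b*x)/b) \<longlongrightarrow> 0) at_top" proof -
        have "filterlim (\<lambda>x. b*x) at_top at_top"
          using b by (intro filterlim_tendsto_pos_mult_at_top[OF tendsto_const] filterlim_ident)
        hence "filterlim (\<lambda>x. exp (b*x)) at_top at_top" by (rule filterlim_compose[OF exp_at_top])
        hence "((\<lambda>x. inverse (exp (b*x))) \<longlongrightarrow> 0) at_top" by (rule tendsto_inverse_0_at_top)
        hence "((\<lambda>x. - inverse (exp (b*x)) / b) \<longlongrightarrow> - 0 / b) at_top"
          by (intro tendsto_divide tendsto_minus tendsto_const) (use b in auto)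
        thus ?thesis by (simp add: exp_minus)
      qed
    qed
    thus ?thesis by simp
  qed
  have E2: "(\<integral>\<^sup>+x. E (-x) \<partial>lborel) = ennreal (1/b)"
    using nn_integral_real_affine[OF Em, of "-1" 0] E1 by simp
  have "(\<integral>\<^sup>+x. ennreal (exp (-b*\<bar>x\<bar>)) \<partial>lborel) \<le> (\<integral>\<^sup>+x. E x + E (-x) \<partial>lborel)"
    by (intro nn_integral_mono) (auto simp: E_def indicator_def abs_if)
  also have "\<dots> = (\<integral>\<^sup>+x. E x \<partial>lborel) + (\<integral>\<^sup>+x. E (-x) \<partial>lborel)"
    by (rule nn_integral_add) (auto simp: E_def)
  also have "\<dots> = ennreal (2/b)" using E1 E2 b by (simp flip: ennreal_plus)
  finally show ?thesis .
qed


theorem lemma6: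
  fixes \<pi>1 :: "real \<Rightarrow> real" and q k :: real
  assumes pos: "\<And>x. \<pi>1 x > 0"
    and meas: "\<pi>1 \<in> borel_measurable lborel"
    and intg: "integrable lborel \<pi>1"
    and norm: "integral\<^sup>L lborel \<pi>1 = 1"
    and diff: "\<And>x. (\<lambda>t. ln (\<pi>1 t)) differentiable (at x)"
    and cont: "continuous_on UNIV (deriv (\<lambda>t. ln (\<pi>1 t)))"
    and q: "0 \<le> q" "q < 1"
    and theta_lower: "Liminf at_infinity
           (\<lambda>x. ereal (\<bar>deriv (\<lambda>t. ln (\<pi>1 t)) x\<bar> / \<bar>x\<bar> powr q)) > 0"
    and theta_upper: "Limsup at_infinity
           (\<lambda>x. ereal (\<bar>deriv (\<lambda>t. ln (\<pi>1 t)) x\<bar> / \<bar>x\<bar> powr q)) < \<infinity>"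
    and k: "0 \<le> k"
  shows "\<exists>\<gamma>>0. Limsup at_top (\<lambda>h. ereal
           (measure (density lborel (\<lambda>x. ennreal (\<pi>1 x))) {x. \<bar>x\<bar> > k + h}
            * exp (\<gamma> * h powr (1 + q) + q * ln h))) < \<infinity>"
proof -
  define L where "L = (\<lambda>t. ln (\<pi>1 t))"
  define D where "D = deriv L"
  have dL: "\<And>x. (L has_real_derivative D x) (at x)"
    using diff DERIV_deriv_iff_real_differentiable unfolding L_def D_def by blast
  have piL: "\<And>x. \<pi>1 x = exp (L x)" using pos by (simp add: L_def)
  have contD: "continuous_on UNIV D" using cont by (simp add: D_def L_def)
  obtain c0 :: ereal where c0: "0 < c0"
    "c0 < Liminf at_infinity (\<lambda>x. ereal (\<bar>D x\<bar> / \<bar>x\<bar> powr q))"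
    using dense[OF theta_lower] unfolding D_def L_def by blast
  have ev: "eventually (\<lambda>x. c0 < ereal (\<bar>D x\<bar> / \<bar>x\<bar> powr q)) at_infinity"
    using le_Liminf_iff[THEN iffD1, OF order.refl] c0(2) by blast
  have "c0 \<noteq> \<infinity>" using c0(2) by auto
  then obtain c where cc: "c0 = ereal c" using c0(1) by (cases c0) auto
  have cpos: "c > 0" using c0(1) cc by simp
  obtain R0 where R0: "\<And>x. R0 \<le> norm x \<Longrightarrow> c < \<bar>D x\<bar> / \<bar>x\<bar> powr q"
    using ev unfolding eventually_at_infinity cc by auto
  define R where "R = max R0 1"
  have R1: "R \<ge> 1" by (simp add: R_def)
  have lowD: "c * \<bar>x\<bar> powr q < \<bar>D x\<bar>" if "R \<le> \<bar>x\<bar>" for x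
  proof -
    have "\<bar>x\<bar> > 0" using that R1 by simp
    hence "\<bar>x\<bar> powr q > 0" by simp
    moreover have "c < \<bar>D x\<bar> / \<bar>x\<bar> powr q" using R0[of x] that by (simp add: R_def)
    ultimately show ?thesis by (simp add: pos_less_divide_eq)
  qed
  have cP: "c * \<bar>x\<bar> powr q > 0" if "R \<le> \<bar>x\<bar>" for x
    using that R1 cpos by simp
  have nzD: "D x \<noteq> 0" if "R \<le> \<bar>x\<bar>" for x
    using lowD[OF that] cP[OF that] by auto
  have rneg: "D x < 0" if x: "R \<le> x" for x
  proof (rule ccontr)
    assume "\<not> D x < 0"
    then have "D x > 0" using nzD[of x] x by force
    note dx = this
    have dpos: "D y > 0" if "R \<le> y" for y
      by (rule sign_const[OF contD _ dx]) (use x that in \<open>auto intro!: nzD\<close>)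
    have mono: "L R \<le> L y" if "R \<le> y" for y
      by (rule DERIV_nonneg_imp_nondecreasing[OF that])
         (use dL dpos less_imp_le in \<open>blast intro: order_trans\<close>)
    show False
      by (rule no_const_lower[OF intg norm _ pos[of R], of R])
         (use pos less_imp_le mono piL in auto)
  qed
  have lpos: "D x > 0" if x: "x \<le> -R" for x
  proof (rule ccontr)
    assume "\<not> D x > 0"
    then have "- D x > 0" using nzD[of x] x by force
    note dx = this
    have dneg: "- D y > 0" if "y \<le> -R" for y
      by (rule sign_const[OF continuous_on_minus[OF contD] _ dx])
         (use x that in \<open>auto intro!: nzD\<close>)
    have mono: "L (-R) \<le> L y" if "y \<le> -R" for y
      by (rule DERIV_nonpos_imp_nonincreasing[OF that])
         (use dL dneg in \<open>fastforce intro: order_trans\<close>)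
    show False
      by (rule no_const_lower[OF intg norm _ pos[of "-R"], of "-R - 2 / \<pi>1 (-R)"])
         (use pos less_imp_le mono piL in auto)
  qed
  define a where "a = c / (1 + q)"
  have apos: "a > 0" using cpos q by (simp add: a_def)
  have rdec: "L x \<le> L R + a * R powr (1+q) - a * x powr (1+q)" if x: "R \<le> x" for x
  proof -
    define g where "g = (\<lambda>t. L t + a * t powr (1+q))"
    have "g x \<le> g R"
    proof (rule DERIV_nonpos_imp_nonincreasing[OF x])
      fix t assume t: "R \<le> t" "t \<le> x"
      hence tp: "t > 0" using R1 by simp
      have "(g has_real_derivative D t + c * t powr q) (at t)"
        unfolding g_def using tp q
        by (auto intro!: derivative_eq_intros dL simp: a_def powr_diff)
      moreover have "D t + c * t powr q \<le> 0"
        using lowD[of t] rneg[of t] t tp by auto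
      ultimately show "\<exists>y. DERIV g t :> y \<and> y \<le> 0" by blast
    qed
    thus ?thesis by (simp add: g_def)
  qed
  have ldec: "L x \<le> L (-R) + a * R powr (1+q) - a * (-x) powr (1+q)" if x: "x \<le> -R" for x
  proof -
    define g where "g = (\<lambda>t. L t + a * (-t) powr (1+q))"
    have "g x \<le> g (-R)"
    proof (rule DERIV_nonneg_imp_nondecreasing[OF x])
      fix t assume t: "x \<le> t" "t \<le> -R"
      hence tp: "-t > 0" using R1 by simp
      have "(g has_real_derivative D t - c * (-t) powr q) (at t)"
        unfolding g_def using tp q
        by (auto intro!: derivative_eq_intros dL simp: a_def powr_diff)
      moreover have "D t - c * (-t) powr q \<ge> 0"
        using lowD[of t] lpos[of t] t tp by auto
      ultimately show "\<exists>y. DERIV g t :> y \<and> y \<ge> 0" by blast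
    qed
    thus ?thesis by (simp add: g_def)
  qed
  define B where "B = max (L R) (L (-R)) + a * R powr (1+q)"
  have decay: "\<pi>1 x \<le> exp (B - a * \<bar>x\<bar> powr (1+q))" if "R \<le> \<bar>x\<bar>" for x
  proof (cases "x \<ge> 0")
    case True
    then show ?thesis using rdec[of x] that piL[of x] by (simp add: B_def)
  next
    case False
    then show ?thesis using ldec[of x] that piL[of x] by (simp add: B_def)
  qed
  define b where "b = a / 2"
  have bpos: "b > 0" using apos by (simp add: b_def)
  have tail: "measure (density lborel (\<lambda>x. ennreal (\<pi>1 x))) {x. \<bar>x\<bar> > k + h}
              \<le> exp B * exp (- b * h powr (1+q)) * (2/b)" if h: "R \<le> h" for h
  proof -
    define S where "S = {x::real. \<bar>x\<bar> > k + h}"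
    define K where "K = exp B * exp (- b * h powr (1+q))"
    have Sm: "S \<in> sets lborel" unfolding S_def by measurable
    have pim: "(\<lambda>x. ennreal (\<pi>1 x)) \<in> borel_measurable lborel" using meas by measurable
    have pw: "ennreal (\<pi>1 x) * indicator S x \<le> ennreal K * ennreal (exp (- b * \<bar>x\<bar>))" for x
    proof (cases "x \<in> S")
      case True
      hence xh: "h \<le> \<bar>x\<bar>" using k by (simp add: S_def)
      have x1: "1 \<le> \<bar>x\<bar>" using xh h R1 by simp
      have "\<bar>x\<bar> powr 1 \<le> \<bar>x\<bar> powr (1+q)" using x1 q by (intro powr_mono) auto
      hence p1: "\<bar>x\<bar> \<le> \<bar>x\<bar> powr (1+q)" using x1 by simp
      have p2: "h powr (1+q) \<le> \<bar>x\<bar> powr (1+q)" using xh h R1 q by (intro powr_mono2) auto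
      have "\<pi>1 x \<le> exp (B - a * \<bar>x\<bar> powr (1+q))" using decay xh h by simp
      also have "\<dots> \<le> exp (B + (- b * h powr (1+q)) + (- b * \<bar>x\<bar>))"
      proof -
        have "a * \<bar>x\<bar> \<le> a * \<bar>x\<bar> powr (1+q)" "a * h powr (1+q) \<le> a * \<bar>x\<bar> powr (1+q)"
          using p1 p2 apos by (auto intro: mult_left_mono)
        thus ?thesis by (simp add: b_def)
      qed
      also have "\<dots> = K * exp (- b * \<bar>x\<bar>)" unfolding K_def by (simp only: exp_add)
      finally show ?thesis using True by (simp add: ennreal_mult' [symmetric] K_def)
    qed simp
    have "emeasure (density lborel (\<lambda>x. ennreal (\<pi>1 x))) S
          = (\<integral>\<^sup>+x. ennreal (\<pi>1 x) * indicator S x \<partial>lborel)"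
      by (rule emeasure_density[OF pim Sm])
    also have "\<dots> \<le> (\<integral>\<^sup>+x. ennreal K * ennreal (exp (- b * \<bar>x\<bar>)) \<partial>lborel)"
      by (intro nn_integral_mono pw)
    also have "\<dots> = ennreal K * (\<integral>\<^sup>+x. ennreal (exp (- b * \<bar>x\<bar>)) \<partial>lborel)"
      by (rule nn_integral_cmult) measurable
    also have "\<dots> \<le> ennreal K * ennreal (2/b)"
      by (intro mult_left_mono exp_abs_nn bpos) simp
    also have "\<dots> = ennreal (K * (2/b))" using bpos by (intro ennreal_mult[symmetric]) (auto simp: K_def)
    finally have "emeasure (density lborel (\<lambda>x. ennreal (\<pi>1 x))) S \<le> ennreal (K * (2/b))" .
    hence "measure (density lborel (\<lambda>x. ennreal (\<pi>1 x))) S \<le> K * (2/b)"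
      unfolding measure_def using bpos by (intro enn2real_leI) (auto simp: K_def)
    thus ?thesis by (simp add: S_def K_def)
  qed
  define C where "C = exp B * (2/b) * (2/b)"
  show ?thesis
  proof (intro exI conjI)
    show "b/2 > 0" using bpos by simp
    have "eventually (\<lambda>h. ereal (measure (density lborel (\<lambda>x. ennreal (\<pi>1 x))) {x. \<bar>x\<bar> > k + h}
            * exp (b/2 * h powr (1 + q) + q * ln h)) \<le> ereal C) at_top"
      using eventually_ge_at_top[of R]
    proof eventually_elim
      case (elim h)
      define M where "M = measure (density lborel (\<lambda>x. ennreal (\<pi>1 x))) {x. \<bar>x\<bar> > k + h}"
      define P where "P = h powr (1+q)"
      have h1: "h \<ge> 1" using elim R1 by simp
      have "h powr 1 \<le> h powr (1+q)" using h1 q by (intro powr_mono) auto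
      hence Ph: "h \<le> P" using h1 by (simp add: P_def)
      have hq: "h powr q \<le> h powr 1" using h1 q by (intro powr_mono) auto
      have M0: "M \<ge> 0" by (simp add: M_def)
      have "M * exp (b/2 * P + q * ln h) = M * (exp (b/2 * P) * h powr q)"
        using h1 by (simp add: exp_add powr_def)
      also have "\<dots> \<le> (exp B * exp (- b * P) * (2/b)) * (exp (b/2 * P) * h powr q)"
        using tail[OF elim] by (intro mult_right_mono) (auto simp: M_def P_def)
      also have "\<dots> = exp B * (2/b) * (exp (- (b/2) * P) * h powr q)"
      proof -
        have "exp (- b * P) * exp (b/2 * P) = exp (- (b/2) * P)"
          by (simp add: mult_exp_exp)
        thus ?thesis by (metis (no_types, lifting) mult.assoc mult.commute)
      qed
      also have "\<dots> \<le> exp B * (2/b) * (exp (- (b/2) * h) * h)"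
        using Ph hq h1 bpos by (intro mult_left_mono mult_mono) auto
      also have "\<dots> \<le> exp B * (2/b) * (2/b)"
      proof -
        have "b/2 * h < exp (b/2 * h)" using exp_ge_add_one_self[of "b/2*h"] by linarith
        hence "h < (2/b) * exp (b/2 * h)" using bpos by (simp add: field_simps)
        hence "exp (- (b/2) * h) * h \<le> 2/b" using bpos
          by (simp add: exp_minus field_simps)
        thus ?thesis using bpos by (intro mult_left_mono) auto
      qed
      finally show ?case by (simp add: M_def P_def C_def)
    qed
    hence "Limsup at_top (\<lambda>h. ereal (measure (density lborel (\<lambda>x. ennreal (\<pi>1 x))) {x. \<bar>x\<bar> > k + h}
            * exp (b/2 * h powr (1 + q) + q * ln h))) \<le> ereal C"
      by (rule Limsup_bounded)
    thus "Limsup at_top (\<lambda>h. ereal (measure (density lborel (\<lambda>x. ennreal (\<pi>1 x))) {x. \<bar>x\<bar> > k + h}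
            * exp (b/2 * h powr (1 + q) + q * ln h))) < \<infinity>"
      using le_less_trans by fastforce
  qed
qed

end
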